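(* Let $c>0$, $\varepsilon>0$, let $\mathcal{D}$ be a distribution over $\mathbb{R}^k_{\ge0}$ with $\mathrm{BRev}(\mathcal{D})<\infty$, let $M$ be a $c$-expensive mechanism that is oddly-priced or evenly-priced, and let $(X,Q)$ be an $\varepsilon$-representative sequence for $M,\mathcal{D}$. Then \[\mathrm{MenuGap}(X,Q)\ge\frac{\mathrm{Rev}(\mathcal{D},M)}{4(1+\varepsilon)\,\mathrm{BRev}(\mathcal{D})}.\]
   Context: Setting: one seller, one additive buyer, $k$ items; the buyer's value vector $\vec v\in\mathbb{R}^k_{\ge0}$ is drawn from a distribution $\mathcal{D}$. A mechanism $M$ is a set of options $(\vec q,p)$ with $\vec q\in[0,1]^k$, $p\in\mathbb{R}$, always containing the null option $(\vec 0,0)$; a buyer with values $\vec v$ selects an option maximizing $\vec v\cdot\vec q-p$ (ties broken arbitrarily; a maximizer is assumed to exist), and $\vec q^M(\vec v),p^M(\vec v)$ denote the allocation and price of the selected option. $\mathrm{Rev}(\mathcal{D},M)=\mathbb{E}_{\vec v\sim\mathcal{D}}[p^M(\vec v)]$; $\mathrm{BRev}(\mathcal{D})=\sup_{p\ge0} p\cdot\Pr_{\vec v\sim\mathcal{D}}[\sum_i v_i\ge p]$. A mechanism is $c$-expensive if every option other than the null option has price at least $c$; a $c$-expensive mechanism is oddly-priced (resp. evenly-priced) if every non-null option has price in $[c2^i,c2^{i+1})$ for some odd (resp. even) integer $i$. $\varepsilon$-representative sequence for $M,\mathcal{D}$: set $\vec q_0=\vec 0$; let $a=1$ if $M$ is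 oddly-priced and $a=0$ if evenly-priced; for $j\in\mathbb{N}_+$ let $B_j:=\{\vec v\in\mathrm{supp}(\mathcal{D}): p^M(\vec v)\in[c2^{2(j-1)+a},c2^{2(j-1)+a+1})\}$; for each $j$ with $B_j\neq\emptyset$ pick $\vec x_j\in B_j$ with $\|\vec x_j\|_1\le(1+\varepsilon)\|\vec v\|_1$ for all $\vec v\in B_j$, and set $\vec q_j:=\vec q^M(\vec x_j)$; indices $j$ with $B_j=\emptyset$ are omitted (later indices shifted down). $X=(\vec x_j)_{j\ge1}$, $Q=(\vec q_j)_{j\ge0}$. MenuGap: for a sequence $X=(\vec x_i)_{i=1}^N$ of nonzero points of $\mathbb{R}^k_{\ge0}$ and $Q=(\vec q_i)_{i=0}^N\subset[0,1]^k$ with $\vec q_0=\vec0$, $\mathrm{gap}_i^{X,Q}:=\min_{0\le j<i}(\vec q_i-\vec q_j)\cdot\vec x_i$ and $\mathrm{MenuGap}(X,Q):=\sum_{i=1}^N \mathrm{gap}_i^{X,Q}/\|\vec x_i\|_1$. *)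

theory Defs
  imports "HOL-Probability.Probability"
begin

type_synonym ('k) option_t = "(real ^ 'k) \<times> real"   (* (allocation q, price p) *)

definition norm1 :: "real ^ 'k::finite \<Rightarrow> real" where
  "norm1 v = (\<Sum>i\<in>UNIV. \<bar>v $ i\<bar>)"

definition nonneg_distribution :: "(real ^ 'k::finite) measure \<Rightarrow> bool" where
  "nonneg_distribution D \<longleftrightarrow> prob_space D \<and> sets D = sets borel \<and>
     (AE v in D. \<forall>i. 0 \<le> v $ i)"

definition dist_supp :: "(real ^ 'k::finite) measure \<Rightarrow> (real ^ 'k) set" where
  "dist_supp D = {v. \<forall>e>0. 0 < measure D (ball v e)}"

definition BRev :: "(real ^ 'k::finite) measure \<Rightarrow> ereal" where
  "BRev D = (SUP p\<in>{0::real..}. ereal (p * measure D {v \<in> space D. (\<Sum>i\<in>UNIV. v $ i) \<ge> p}))"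

definition is_mechanism :: "'k::finite option_t set \<Rightarrow> bool" where
  "is_mechanism M \<longleftrightarrow> (0, 0) \<in> M \<and> (\<forall>(q, p)\<in>M. \<forall>i. 0 \<le> q $ i \<and> q $ i \<le> 1)"

definition utility :: "real ^ 'k::finite \<Rightarrow> 'k option_t \<Rightarrow> real" where
  "utility v o' = v \<bullet> fst o' - snd o'"

definition is_selection :: "'k::finite option_t set \<Rightarrow> (real ^ 'k) set \<Rightarrow> (real ^ 'k \<Rightarrow> 'k option_t) \<Rightarrow> bool" where
  "is_selection M S sel \<longleftrightarrow> (\<forall>v\<in>S. sel v \<in> M \<and> (\<forall>o'\<in>M. utility v o' \<le> utility v (sel v)))"

definition Rev :: "(real ^ 'k::finite) measure \<Rightarrow> (real ^ 'k \<Rightarrow> 'k option_t) \<Rightarrow> ereal" where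
  "Rev D sel = enn2ereal (\<integral>\<^sup>+ v. ennreal (snd (sel v)) \<partial>D)"

definition c_expensive :: "real \<Rightarrow> 'k::finite option_t set \<Rightarrow> bool" where
  "c_expensive c M \<longleftrightarrow> (\<forall>(q, p)\<in>M. (q, p) \<noteq> (0, 0) \<longrightarrow> c \<le> p)"

definition oddly_priced :: "real \<Rightarrow> 'k::finite option_t set \<Rightarrow> bool" where
  "oddly_priced c M \<longleftrightarrow> c_expensive c M \<and>
     (\<forall>(q, p)\<in>M. (q, p) \<noteq> (0, 0) \<longrightarrow>
        (\<exists>i::int. odd i \<and> c * 2 powr i \<le> p \<and> p < c * 2 powr (i + 1)))"

definition evenly_priced :: "real \<Rightarrow> 'k::finite option_t set \<Rightarrow> bool" where
  "evenly_priced c M \<longleftrightarrow> c_expensive c M \<and>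
     (\<forall>(q, p)\<in>M. (q, p) \<noteq> (0, 0) \<longrightarrow>
        (\<exists>i::int. even i \<and> c * 2 powr i \<le> p \<and> p < c * 2 powr (i + 1)))"

definition bucket :: "real \<Rightarrow> nat \<Rightarrow> (real ^ 'k::finite) measure \<Rightarrow> (real ^ 'k \<Rightarrow> 'k option_t)
    \<Rightarrow> nat \<Rightarrow> (real ^ 'k) set" where
  "bucket c a D sel j = {v \<in> dist_supp D.
      c * 2 powr (real (2 * (j - 1) + a)) \<le> snd (sel v) \<and>
      snd (sel v) < c * 2 powr (real (2 * (j - 1) + a + 1))}"

definition idx :: "enat \<Rightarrow> nat set" where
  "idx N = {i. 1 \<le> i \<and> enat i \<le> N}"

text \<open>The nonempty buckets B_j, j \<ge> 1, are enumerated in increasing order by e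
  (this is the "omit empty buckets and shift indices down" step).\<close>
definition representative ::
  "real \<Rightarrow> real \<Rightarrow> (real ^ 'k::finite) measure \<Rightarrow> 'k option_t set \<Rightarrow> (real ^ 'k \<Rightarrow> 'k option_t)
    \<Rightarrow> (nat \<Rightarrow> real ^ 'k) \<Rightarrow> (nat \<Rightarrow> real ^ 'k) \<Rightarrow> enat \<Rightarrow> bool" where
  "representative c \<epsilon> D M sel X Q N \<longleftrightarrow>
     (\<exists>a::nat. ((a = 1 \<and> oddly_priced c M) \<or> (a = 0 \<and> evenly_priced c M)) \<and>
       (\<exists>e::nat \<Rightarrow> nat. strict_mono_on (idx N) e \<and>
          e ` idx N = {j. 1 \<le> j \<and> bucket c a D sel j \<noteq> {}} \<and>
          Q 0 = 0 \<and>
          (\<forall>i\<in>idx N. X i \<in> bucket c a D sel (e i) \<and>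
              (\<forall>v\<in>bucket c a D sel (e i). norm1 (X i) \<le> (1 + \<epsilon>) * norm1 v) \<and>
              Q i = fst (sel (X i)))))"

definition gap :: "(nat \<Rightarrow> real ^ 'k::finite) \<Rightarrow> (nat \<Rightarrow> real ^ 'k) \<Rightarrow> nat \<Rightarrow> real" where
  "gap X Q i = Min ((\<lambda>j. (Q i - Q j) \<bullet> X i) ` {..<i})"

definition MenuGap :: "(nat \<Rightarrow> real ^ 'k::finite) \<Rightarrow> (nat \<Rightarrow> real ^ 'k) \<Rightarrow> enat \<Rightarrow> ereal" where
  "MenuGap X Q N = (case N of
       enat n \<Rightarrow> ereal (\<Sum>i=1..n. gap X Q i / norm1 (X i))
     | \<infinity> \<Rightarrow> (\<Sum>i. ereal (gap X Q (Suc i) / norm1 (X (Suc i)))))"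

end

theory Submission
  imports Defs
begin
lemma space_D: "nonneg_distribution D \<Longrightarrow> space D = UNIV"
  unfolding nonneg_distribution_def by (metis sets_eq_imp_space_eq space_borel)

lemma supp_nonneg:
  fixes D :: "(real ^ 'k::finite) measure"
  assumes nd: "nonneg_distribution D" and v: "v \<in> dist_supp D"
  shows "0 \<le> v $ i"
proof (rule ccontr)
  assume neg: "\<not> 0 \<le> v $ i"
  define r where "r = - v $ i"
  have r: "r > 0" using neg r_def by simp
  have sp: "space D = UNIV" using space_D[OF nd] .
  have ae: "AE w in D. \<forall>i. 0 \<le> w $ i" using nd unfolding nonneg_distribution_def by blast
  have "AE w in D. \<not> (w \<in> ball v r)"
  proof (rule eventually_mono[OF ae])
    fix w :: "real ^ 'k" assume h: "\<forall>i. 0 \<le> w $ i"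
    show "\<not> w \<in> ball v r"
    proof
      assume "w \<in> ball v r"
      hence "norm (w - v) < r" by (simp add: dist_norm norm_minus_commute)
      moreover have "\<bar>(w - v) $ i\<bar> \<le> norm (w - v)" by (rule component_le_norm_cart)
      ultimately have "\<bar>w $ i - v $ i\<bar> < r" by simp
      thus False using h[rule_format, of i] r_def by linarith
    qed
  qed
  hence "emeasure D {w \<in> space D. w \<in> ball v r} = 0" by (rule emeasure_eq_0_AE)
  hence "emeasure D (ball v r) = 0" using sp by (simp add: ball_def)
  hence "measure D (ball v r) = 0" by (simp add: measure_def)
  moreover have "0 < measure D (ball v r)" using v r unfolding dist_supp_def by blast
  ultimately show False by simp
qed

lemma AE_supp:
  fixes D :: "(real ^ 'k::finite) measure"
  assumes nd: "nonneg_distribution D"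
  shows "AE v in D. v \<in> dist_supp D"
proof -
  have ps: "prob_space D" and sD: "sets D = sets borel" using nd unfolding nonneg_distribution_def by auto
  have sp: "space D = UNIV" using space_D[OF nd] .
  define F where "F = {ball v e | v e. e > 0 \<and> measure D (ball v e) = 0}"
  have opF: "\<And>S. S \<in> F \<Longrightarrow> open S" unfolding F_def by auto
  obtain F' where F': "F' \<subseteq> F" "countable F'" "\<Union>F' = \<Union>F"
    using Lindelof[OF opF] by blast
  have nullF: "S \<in> null_sets D" if SF: "S \<in> F" for S
  proof -
    obtain v e where S: "S = ball v e" "measure D (ball v e) = 0" using SF unfolding F_def by blast
    have "S \<in> sets D" using S sD by simp
    moreover have "emeasure D S = 0"
      using S ps by (simp add: finite_measure.emeasure_eq_measure prob_space.finite_measure)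
    ultimately show ?thesis by (simp add: null_sets_def)
  qed
  have "\<Union>(id ` F') \<in> null_sets D"
    by (rule null_sets_UN') (use F' nullF in auto)
  hence N: "\<Union>F' \<in> null_sets D" by simp
  have sub: "{x \<in> space D. x \<notin> dist_supp D} \<subseteq> \<Union>F'"
  proof
    fix x assume "x \<in> {x \<in> space D. x \<notin> dist_supp D}"
    then obtain e where e: "e > 0" "\<not> 0 < measure D (ball x e)" unfolding dist_supp_def by auto
    hence "measure D (ball x e) = 0" using measure_nonneg[of D "ball x e"] by linarith
    hence "ball x e \<in> F" using e F_def by auto
    moreover have "x \<in> ball x e" using e by simp
    ultimately show "x \<in> \<Union>F'" using F' by blast
  qed
  show ?thesis
    by (rule AE_I[OF sub]) (use N in auto)
qed

lemma reindex_le: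
  fixes \<phi> \<psi> :: "nat \<Rightarrow> ennreal"
  assumes inj: "inj_on g A"
    and z: "\<And>j. j \<notin> g ` A \<Longrightarrow> \<phi> j = 0"
    and le: "\<And>i. i \<in> A \<Longrightarrow> \<phi> (g i) \<le> \<psi> i"
  shows "(\<Sum>j. \<phi> j) \<le> (\<Sum>i. if i \<in> A then \<psi> i else 0)"
proof -
  have "(\<Sum>j. \<phi> j) = (\<integral>\<^sup>+ j. \<phi> j \<partial>count_space UNIV)"
    by (simp add: nn_integral_count_space_nat)
  also have "\<dots> = (\<integral>\<^sup>+ j. \<phi> j * indicator (g ` A) j \<partial>count_space UNIV)"
    by (rule nn_integral_cong) (auto simp: indicator_def z)
  also have "\<dots> = (\<integral>\<^sup>+ j. \<phi> j \<partial>count_space (g ` A))"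
    by (simp add: nn_integral_count_space_indicator)
  also have "\<dots> = (\<integral>\<^sup>+ i. \<phi> (g i) \<partial>count_space A)"
    by (rule nn_integral_bij_count_space[symmetric]) (rule inj_on_imp_bij_betw[OF inj])
  also have "\<dots> \<le> (\<integral>\<^sup>+ i. \<psi> i \<partial>count_space A)"
    by (rule nn_integral_mono) (simp add: le)
  also have "\<dots> = (\<integral>\<^sup>+ i. \<psi> i * indicator A i \<partial>count_space UNIV)"
    by (simp add: nn_integral_count_space_indicator)
  also have "\<dots> = (\<integral>\<^sup>+ i. (if i \<in> A then \<psi> i else 0) \<partial>count_space UNIV)"
    by (rule nn_integral_cong) (auto simp: indicator_def)
  also have "\<dots> = (\<Sum>i. if i \<in> A then \<psi> i else 0)"
    by (simp add: nn_integral_count_space_nat)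
  finally show ?thesis .
qed

theorem proposition4p6:
  fixes c \<epsilon> :: real
    and D :: "(real ^ 'k) measure"
    and M :: "((real ^ 'k) \<times> real) set"
    and sel :: "real ^ 'k \<Rightarrow> (real ^ 'k) \<times> real"
    and X Q :: "nat \<Rightarrow> real ^ 'k"
    and N :: enat
  assumes "c > 0" and "\<epsilon> > 0"
    and "nonneg_distribution D"
    and "BRev D < \<infinity>"
    and "is_mechanism M"
    and "c_expensive c M"
    and "oddly_priced c M \<or> evenly_priced c M"
    and "is_selection M {v. \<forall>i. 0 \<le> v $ i} sel"
    and "(\<lambda>v. snd (sel v)) \<in> borel_measurable D"
    and "representative c \<epsilon> D M sel X Q N"
  shows "MenuGap X Q N \<ge> Rev D sel / (4 * (1 + ereal \<epsilon>) * BRev D)"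
proof -
  note cpos = assms(1) and epos = assms(2) and nd = assms(3) and mech = assms(5)
    and cexp = assms(6) and issel = assms(8)
  have ps: "prob_space D" and sD: "sets D = sets borel" and aeO: "AE v in D. \<forall>i. 0 \<le> v $ i"
    using nd unfolding nonneg_distribution_def by auto
  have sp: "space D = UNIV" using space_D[OF nd] .
  define Onn where "Onn = {v :: real ^ 'k. \<forall>i. 0 \<le> v $ i}"
  define T where "T v = snd (sel v)" for v
  have Tmeas[measurable]: "T \<in> borel_measurable D" using assms(9) unfolding T_def by simp
  obtain a e where a: "(a = 1 \<and> oddly_priced c M) \<or> (a = 0 \<and> evenly_priced c M)"
    and emono: "strict_mono_on (idx N) e"
    and eimg: "e ` idx N = {j. 1 \<le> j \<and> bucket c a D sel j \<noteq> {}}"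
    and Q0: "Q 0 = 0"
    and Xb: "\<And>i. i \<in> idx N \<Longrightarrow> X i \<in> bucket c a D sel (e i)"
    and Xmin: "\<And>i v. i \<in> idx N \<Longrightarrow> v \<in> bucket c a D sel (e i) \<Longrightarrow> norm1 (X i) \<le> (1 + \<epsilon>) * norm1 v"
    and QX: "\<And>i. i \<in> idx N \<Longrightarrow> Q i = fst (sel (X i))"
    using assms(10) unfolding representative_def by blast
  define lo where "lo j = c * 2 powr real (2 * (j - 1) + a)" for j :: nat
  define hi where "hi j = c * 2 powr real (2 * (j - 1) + a + 1)" for j :: nat
  have hi_eq: "hi j = 2 * lo j" for j
    unfolding hi_def lo_def by (simp add: powr_add)
  have lo_pos: "lo j > 0" for j unfolding lo_def using cpos by simp
  have lohi: "2 * hi j' \<le> lo j" if "j' < j" "1 \<le> j'" for j j'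
  proof -
    have "2 * hi j' = c * 2 powr real (2 * (j' - 1) + a + 2)"
      unfolding hi_def by (simp add: powr_add)
    also have "\<dots> \<le> c * 2 powr real (2 * (j - 1) + a)"
      using that cpos by (intro mult_left_mono powr_mono) auto
    finally show ?thesis unfolding lo_def .
  qed
  have bucket_eq: "bucket c a D sel j = {v \<in> dist_supp D. lo j \<le> T v \<and> T v < hi j}" for j
    unfolding bucket_def lo_def hi_def T_def ..
  have suppO: "v \<in> dist_supp D \<Longrightarrow> v \<in> Onn" for v
    unfolding Onn_def using supp_nonneg[OF nd] by blast
  have selM: "v \<in> Onn \<Longrightarrow> sel v \<in> M" for v using issel unfolding is_selection_def Onn_def by blast
  have IC: "v \<in> Onn \<Longrightarrow> o' \<in> M \<Longrightarrow> v \<bullet> fst o' - snd o' \<le> v \<bullet> fst (sel v) - T v" for v o'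
    using issel unfolding is_selection_def Onn_def utility_def T_def by blast
  have null: "(0, 0) \<in> M" using mech unfolding is_mechanism_def by blast
  have Tnn: "v \<in> Onn \<Longrightarrow> 0 \<le> T v" for v
  proof -
    assume v: "v \<in> Onn"
    show "0 \<le> T v"
    proof (cases "sel v = (0, 0)")
      case True thus ?thesis by (simp add: T_def)
    next
      case False
      hence "c \<le> T v" using cexp selM[OF v] unfolding c_expensive_def T_def
        by (metis (mono_tags, lifting) case_prodD prod.collapse)
      thus ?thesis using cpos by simp
    qed
  qed
  have cT: "v \<in> Onn \<Longrightarrow> sel v \<noteq> (0,0) \<Longrightarrow> c \<le> T v" for v
    using cexp selM unfolding c_expensive_def T_def
    by (metis (mono_tags, lifting) case_prodD prod.collapse)
  have T_bucket: "\<exists>j\<ge>1. lo j \<le> T v \<and> T v < hi j" if v: "v \<in> Onn" and Tp: "0 < T v" for v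
  proof -
    obtain q p where qp: "sel v = (q, p)" by fastforce
    have ne: "(q, p) \<noteq> (0, 0)" using Tp qp unfolding T_def by auto
    have inM: "(q, p) \<in> M" using selM[OF v] qp by simp
    have Tp': "T v = p" using qp unfolding T_def by simp
    have cle: "c \<le> T v" using cT[OF v] ne qp by simp
    obtain i :: int where par: "(a = 1 \<and> odd i) \<or> (a = 0 \<and> even i)"
      and l: "c * 2 powr i \<le> T v" and h: "T v < c * 2 powr (i + 1)"
    proof (cases "a = 1")
      case True
      hence "oddly_priced c M" using a by auto
      then obtain i :: int where "odd i" "c * 2 powr i \<le> p" "p < c * 2 powr (i + 1)"
        using inM ne unfolding oddly_priced_def by fastforce
      thus ?thesis using that True Tp' by auto
    next
      case False
      hence "a = 0" "evenly_priced c M" using a by auto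
      then obtain i :: int where "even i" "c * 2 powr i \<le> p" "p < c * 2 powr (i + 1)"
        using inM ne unfolding evenly_priced_def by fastforce
      thus ?thesis using that \<open>a = 0\<close> Tp' by auto
    qed
    have i0: "0 \<le> i"
    proof (rule ccontr)
      assume "\<not> 0 \<le> i"
      hence "real_of_int i + 1 \<le> 0" by simp
      hence "(2::real) powr (real_of_int i + 1) \<le> 2 powr 0" by (intro powr_mono) auto
      hence "c * 2 powr (real_of_int i + 1) \<le> c" using cpos by simp
      thus False using h cle by simp
    qed
    obtain m :: nat where m: "i = 2 * int m + int a"
    proof (cases "a = 1")
      case True
      then obtain b where b: "i = 2 * b + 1" using par by (auto elim: oddE)
      hence "0 \<le> b" using i0 by simp
      thus ?thesis using that[of "nat b"] b True by simp
    next
      case False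
      hence a0: "a = 0" using a by auto
      then obtain b where b: "i = 2 * b" using par by (auto elim: evenE)
      hence "0 \<le> b" using i0 by simp
      thus ?thesis using that[of "nat b"] b a0 by simp
    qed
    have r1: "real (2 * (Suc m - 1) + a) = real_of_int i" using m by simp
    have r2: "real (2 * (Suc m - 1) + a + 1) = real_of_int i + 1" using m by simp
    show ?thesis
      by (rule exI[of _ "Suc m"]) (use l h r1 r2 in \<open>simp add: lo_def hi_def add.commute\<close>)
  qed
  have idx1: "i \<in> idx N \<Longrightarrow> 1 \<le> i" for i unfolding idx_def by simp
  have idx_down: "i \<in> idx N \<Longrightarrow> 1 \<le> j \<Longrightarrow> j < i \<Longrightarrow> j \<in> idx N" for i j
    unfolding idx_def by (auto intro: order_trans[of _ "enat i"])
  have e1: "i \<in> idx N \<Longrightarrow> 1 \<le> e i" for i using eimg by blast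
  have Xinfo: "X i \<in> dist_supp D \<and> X i \<in> Onn \<and> lo (e i) \<le> T (X i) \<and> T (X i) < hi (e i)"
    if "i \<in> idx N" for i
    using Xb[OF that] suppO unfolding bucket_eq by blast
  have gap_ge: "lo (e i) / 2 \<le> gap X Q i" if iI: "i \<in> idx N" for i
  proof -
    have XO: "X i \<in> Onn" and lT: "lo (e i) \<le> T (X i)" using Xinfo[OF iI] by auto
    have all: "lo (e i) / 2 \<le> (Q i - Q j) \<bullet> X i" if ji: "j < i" for j
    proof (cases "j = 0")
      case True
      have "X i \<bullet> fst (0::real^'k, 0::real) - snd (0::real^'k, 0::real) \<le> X i \<bullet> fst (sel (X i)) - T (X i)"
        by (rule IC[OF XO null])
      hence "T (X i) \<le> (Q i - Q j) \<bullet> X i" using True Q0 QX[OF iI] by (simp add: inner_commute)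
      thus ?thesis using lT lo_pos[of "e i"] by linarith
    next
      case False
      hence jI: "j \<in> idx N" using idx_down[OF iI _ ji] by simp
      have ej: "e j < e i" using emono jI iI ji unfolding strict_mono_on_def by blast
      have "2 * hi (e j) \<le> lo (e i)" using lohi[OF ej e1[OF jI]] .
      moreover have "T (X j) < hi (e j)" using Xinfo[OF jI] by simp
      moreover have "X i \<bullet> fst (sel (X j)) - snd (sel (X j)) \<le> X i \<bullet> fst (sel (X i)) - T (X i)"
        by (rule IC[OF XO selM]) (use Xinfo[OF jI] in simp)
      hence "T (X i) - T (X j) \<le> (Q i - Q j) \<bullet> X i"
        using QX[OF iI] QX[OF jI] by (simp add: inner_commute inner_diff_right T_def)
      ultimately show ?thesis using lT by linarith
    qed
    have fin: "finite ((\<lambda>j. (Q i - Q j) \<bullet> X i) ` {..<i})" by simp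
    have ne: "(\<lambda>j. (Q i - Q j) \<bullet> X i) ` {..<i} \<noteq> {}" using idx1[OF iI] by (auto simp: lessThan_empty_iff)
    show ?thesis unfolding gap_def by (rule Min.boundedI[OF fin ne]) (use all in auto)
  qed
  have norm_pos: "0 < norm1 (X i)" if iI: "i \<in> idx N" for i
  proof (rule ccontr)
    assume "\<not> 0 < norm1 (X i)"
    moreover have XO: "X i \<in> Onn" using Xinfo[OF iI] by auto
    moreover have "0 \<le> (\<Sum>k\<in>UNIV. \<bar>X i $ k\<bar>)" by (rule sum_nonneg) simp
    ultimately have "(\<Sum>k\<in>UNIV. \<bar>X i $ k\<bar>) = 0" unfolding norm1_def by linarith
    hence "\<forall>k. X i $ k = 0" by (simp add: sum_nonneg_eq_0_iff)
    hence X0: "X i = 0" by (simp add: vec_eq_iff)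
    have "0 \<bullet> fst (0::real^'k, 0::real) - snd (0::real^'k, 0::real) \<le> 0 \<bullet> fst (sel 0) - T 0"
      using IC[OF _ null, of 0] XO X0 by simp
    hence "T (X i) \<le> 0" using X0 by simp
    thus False using Xinfo[OF iI] lo_pos[of "e i"] by linarith
  qed
  have sumle: "(f::nat\<Rightarrow>ennreal) k \<le> suminf f" for f k
    using sum_le_suminf[of f "{k}"] by (simp add: summableI)
  have BRev_nn: "0 \<le> BRev D"
    unfolding BRev_def by (rule SUP_upper2[of 0]) auto
  define B where "B = real_of_ereal (BRev D)"
  have BRev_eq: "BRev D = ereal B" using BRev_nn assms(4) unfolding B_def by (cases "BRev D") auto
  have B_nn: "0 \<le> B" using BRev_nn BRev_eq by simp
  have sum_meas[measurable]: "(\<lambda>v::real^'k. \<Sum>i\<in>UNIV. v$i) \<in> borel_measurable D"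
    by (subst measurable_cong_sets[of D borel]) (auto simp: sD)
  define L where "L p = {v \<in> space D. p \<le> (\<Sum>i\<in>UNIV. v $ i)}" for p
  have Lmeas: "L p \<in> sets D" for p unfolding L_def by measurable
  have Bbound: "p * measure D (L p) \<le> B" if "0 \<le> p" for p
  proof -
    have "ereal (p * measure D (L p)) \<le> BRev D"
      unfolding BRev_def L_def by (rule SUP_upper) (use that in simp)
    thus ?thesis using BRev_eq by simp
  qed
  define S where "S j = {v \<in> space D. lo j \<le> T v \<and> T v < hi j}" for j
  have Smeas[measurable]: "S j \<in> sets D" for j unfolding S_def by measurable
  define K where "K = 4 * (1 + \<epsilon>) * B"
  have K_nn: "0 \<le> K" unfolding K_def using epos B_nn by simp
  define t where "t i = gap X Q i / norm1 (X i)" for i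
  have t_nn: "i \<in> idx N \<Longrightarrow> 0 \<le> t i" for i
    unfolding t_def using gap_ge[of i] norm_pos[of i] lo_pos[of "e i"] by simp
  have per_bucket: "ennreal (hi (e i)) * emeasure D (S (e i)) \<le> ennreal (K * t i)"
    if iI: "i \<in> idx N" for i
  proof -
    define p where "p = norm1 (X i) / (1 + \<epsilon>)"
    have p_pos: "0 < p" unfolding p_def using norm_pos[OF iI] epos by simp
    have "AE v in D. v \<in> S (e i) \<longrightarrow> v \<in> L p"
      using AE_supp[OF nd]
    proof eventually_elim
      case (elim v)
      show ?case
      proof
        assume vS: "v \<in> S (e i)"
        hence "v \<in> bucket c a D sel (e i)" using elim unfolding bucket_eq S_def by simp
        hence "norm1 (X i) \<le> (1 + \<epsilon>) * norm1 v" by (rule Xmin[OF iI])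
        moreover have "norm1 v = (\<Sum>k\<in>UNIV. v $ k)"
          using suppO[OF elim] unfolding norm1_def Onn_def by simp
        ultimately have "p \<le> (\<Sum>k\<in>UNIV. v $ k)" unfolding p_def using epos
          by (simp add: divide_le_eq mult.commute)
        thus "v \<in> L p" unfolding L_def using sp by simp
      qed
    qed
    hence "emeasure D (S (e i)) \<le> emeasure D (L p)"
      by (intro emeasure_mono_AE Lmeas)
    also have "\<dots> = ennreal (measure D (L p))"
      using ps by (simp add: finite_measure.emeasure_eq_measure prob_space.finite_measure)
    finally have m1: "emeasure D (S (e i)) \<le> ennreal (measure D (L p))" .
    have mB: "measure D (L p) \<le> B / p" using Bbound[of p] p_pos by (simp add: le_divide_eq mult.commute)
    have hi_nn: "0 \<le> hi (e i)" using hi_eq lo_pos[of "e i"] by simp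
    have "ennreal (hi (e i)) * emeasure D (S (e i)) \<le> ennreal (hi (e i)) * ennreal (B / p)"
      using m1 mB by (intro mult_left_mono) (auto intro: order_trans ennreal_leI)
    also have "\<dots> = ennreal (hi (e i) * (B / p))" by (rule ennreal_mult[symmetric]) (use hi_nn B_nn p_pos in auto)
    also have "\<dots> \<le> ennreal (K * t i)"
    proof (rule ennreal_leI)
      have g: "2 * lo (e i) \<le> 4 * gap X Q i" using gap_ge[OF iI] by simp
      have "hi (e i) * (B / p) = (2 * lo (e i)) * B * (1 + \<epsilon>) / norm1 (X i)"
        unfolding p_def hi_eq using epos by (simp add: field_simps)
      also have "\<dots> \<le> (4 * gap X Q i) * B * (1 + \<epsilon>) / norm1 (X i)"
        using g B_nn epos norm_pos[OF iI]
        by (intro divide_right_mono mult_right_mono) auto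
      also have "\<dots> = K * t i" unfolding K_def t_def by (simp add: field_simps)
      finally show "hi (e i) * (B / p) \<le> K * t i" .
    qed
    finally show ?thesis .
  qed
  have empty_bucket: "emeasure D (S j) = 0" if "1 \<le> j" "j \<notin> e ` idx N" for j
  proof -
    have bj: "bucket c a D sel j = {}" using that eimg by blast
    have "AE v in D. \<not> v \<in> S j"
      using AE_supp[OF nd]
    proof eventually_elim
      case (elim v)
      show ?case using bj elim unfolding bucket_eq S_def by auto
    qed
    hence "emeasure D {v \<in> space D. v \<in> S j} = 0" by (rule emeasure_eq_0_AE)
    thus ?thesis unfolding S_def by simp
  qed
  define A where "A = {i. Suc i \<in> idx N}"
  define Sg where "Sg = (\<Sum>i. if i \<in> A then ennreal (t (Suc i)) else 0)"
  define R where "R = (\<integral>\<^sup>+ v. ennreal (T v) \<partial>D)"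
  have "R \<le> (\<integral>\<^sup>+ v. (\<Sum>j. indicator (S (Suc j)) v * ennreal (T v)) \<partial>D)"
    unfolding R_def
  proof (rule nn_integral_mono_AE)
    show "AE v in D. ennreal (T v) \<le> (\<Sum>j. indicator (S (Suc j)) v * ennreal (T v))"
      using aeO
    proof eventually_elim
      case (elim v)
      hence vO: "v \<in> Onn" unfolding Onn_def by simp
      show ?case
      proof (cases "0 < T v")
        case False thus ?thesis by (simp add: ennreal_neg)
      next
        case True
        then obtain j where j: "1 \<le> j" "lo j \<le> T v" "T v < hi j" using T_bucket[OF vO] by blast
        have "v \<in> S (Suc (j - 1))" using j sp unfolding S_def by simp
        hence "ennreal (T v) = indicator (S (Suc (j - 1))) v * ennreal (T v)" by simp
        also have "\<dots> \<le> (\<Sum>j. indicator (S (Suc j)) v * ennreal (T v))" by (rule sumle)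
        finally show ?thesis .
      qed
    qed
  qed
  also have "\<dots> = (\<Sum>j. \<integral>\<^sup>+ v. indicator (S (Suc j)) v * ennreal (T v) \<partial>D)"
    by (rule nn_integral_suminf) measurable
  also have "\<dots> \<le> (\<Sum>j. ennreal (hi (Suc j)) * emeasure D (S (Suc j)))"
  proof (rule suminf_le)
    fix j
    have "(\<integral>\<^sup>+ v. indicator (S (Suc j)) v * ennreal (T v) \<partial>D)
        \<le> (\<integral>\<^sup>+ v. ennreal (hi (Suc j)) * indicator (S (Suc j)) v \<partial>D)"
      by (rule nn_integral_mono) (auto simp: indicator_def S_def intro: ennreal_leI)
    also have "\<dots> = ennreal (hi (Suc j)) * emeasure D (S (Suc j))"
      using nn_integral_cmult_indicator[OF Smeas[of "Suc j"], of "ennreal (hi (Suc j))"] by simp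
    finally show "(\<integral>\<^sup>+ v. indicator (S (Suc j)) v * ennreal (T v) \<partial>D)
        \<le> ennreal (hi (Suc j)) * emeasure D (S (Suc j))" .
  qed (auto simp: summableI)
  also have "\<dots> \<le> (\<Sum>i. if i \<in> A then ennreal (K * t (Suc i)) else 0)"
  proof (rule reindex_le[where g = "\<lambda>i. e (Suc i) - 1"])
    show "inj_on (\<lambda>i. e (Suc i) - 1) A"
    proof (rule inj_onI)
      fix x y assume xA: "x \<in> A" and yA: "y \<in> A" and eq: "e (Suc x) - 1 = e (Suc y) - 1"
      have "e (Suc x) = e (Suc y)" using eq e1[of "Suc x"] e1[of "Suc y"] xA yA unfolding A_def by simp
      hence "Suc x = Suc y" using emono xA yA unfolding A_def strict_mono_on_def
        by (metis linorder_neqE_nat mem_Collect_eq order_less_irrefl)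
      thus "x = y" by simp
    qed
  next
    fix j assume nj: "j \<notin> (\<lambda>i. e (Suc i) - 1) ` A"
    have "Suc j \<notin> e ` idx N"
    proof
      assume "Suc j \<in> e ` idx N"
      then obtain i where iI: "i \<in> idx N" "Suc j = e i" by blast
      obtain i' where "i = Suc i'" using idx1[OF iI(1)] by (cases i) auto
      hence "i' \<in> A" "j = e (Suc i') - 1" using iI unfolding A_def by auto
      thus False using nj by blast
    qed
    thus "ennreal (hi (Suc j)) * emeasure D (S (Suc j)) = 0" using empty_bucket[of "Suc j"] by simp
  next
    fix i assume iA: "i \<in> A"
    hence iI: "Suc i \<in> idx N" unfolding A_def by simp
    have "Suc (e (Suc i) - 1) = e (Suc i)" using e1[OF iI] by simp
    thus "ennreal (hi (Suc (e (Suc i) - 1))) * emeasure D (S (Suc (e (Suc i) - 1))) \<le> ennreal (K * t (Suc i))"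
      using per_bucket[OF iI] by simp
  qed
  also have "\<dots> = ennreal K * Sg"
  proof -
    have "(\<lambda>i. if i \<in> A then ennreal (K * t (Suc i)) else 0) = (\<lambda>i. ennreal K * (if i \<in> A then ennreal (t (Suc i)) else 0))"
      using K_nn t_nn unfolding A_def by (auto simp: ennreal_mult)
    thus ?thesis unfolding Sg_def by simp
  qed
  finally have Rle: "R \<le> ennreal K * Sg" .
  have MG: "MenuGap X Q N = enn2ereal Sg"
  proof (cases N)
    case (enat n)
    have A_eq: "A = {..<n}" unfolding A_def idx_def enat by auto
    have "Sg = (\<Sum>i\<in>{..<n}. ennreal (t (Suc i)))"
      unfolding Sg_def A_eq by (subst suminf_finite[of "{..<n}"]) auto
    also have "\<dots> = ennreal (\<Sum>i\<in>{..<n}. t (Suc i))"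
      by (rule sum_ennreal) (use t_nn in \<open>auto simp: idx_def enat\<close>)
    moreover have "0 \<le> (\<Sum>i\<in>{..<n}. t (Suc i))"
      by (rule sum_nonneg) (use t_nn in \<open>auto simp: idx_def enat\<close>)
    ultimately have "enn2ereal Sg = ereal (\<Sum>i\<in>{..<n}. t (Suc i))"
      by (simp add: enn2ereal_ennreal)
    moreover have "(\<Sum>i\<in>{..<n}. t (Suc i)) = (\<Sum>i=1..n. t i)"
      using sum.atLeast1_atMost_eq[of t n] by simp
    ultimately show ?thesis unfolding MenuGap_def enat t_def by simp
  next
    case infinity
    have A_eq: "A = UNIV" unfolding A_def idx_def infinity by auto
    have "MenuGap X Q N = (\<Sum>i. ereal (t (Suc i)))" unfolding MenuGap_def infinity t_def by simp
    also have "\<dots> = (\<Sum>i. enn2ereal (ennreal (t (Suc i))))"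
      using t_nn by (simp add: idx_def infinity)
    also have "\<dots> = enn2ereal Sg" unfolding Sg_def A_eq by (simp add: suminf_enn2ereal)
    finally show ?thesis .
  qed
  have Rev_eq: "Rev D sel = enn2ereal R" unfolding Rev_def R_def T_def ..
  have den: "4 * (1 + ereal \<epsilon>) * BRev D = ereal K" unfolding BRev_eq K_def by simp
  show ?thesis
  proof (cases "B = 0")
    case True
    hence "R = 0" using Rle unfolding K_def by simp
    thus ?thesis unfolding Rev_eq den MG by (simp add: enn2ereal_nonneg zero_ennreal.rep_eq)
  next
    case False
    hence Kp: "0 < K" using B_nn epos unfolding K_def by simp
    have "enn2ereal R \<le> enn2ereal (ennreal K * Sg)" using Rle by (simp add: less_eq_ennreal.rep_eq)
    also have "\<dots> = ereal K * enn2ereal Sg" using K_nn by (simp add: times_ennreal.rep_eq enn2ereal_ennreal)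
    finally have "enn2ereal R \<le> ereal K * enn2ereal Sg" .
    thus ?thesis unfolding Rev_eq den MG
      by (intro ereal_divide_le_posI) (use Kp in \<open>auto simp: enn2ereal_nonneg\<close>)
  qed
qed
end
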